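(* Let $d\ge3$ and let $C$ be a $d$-dimensional Archimedean copula with Williamson measure $\gamma$. Then $C$ is strict if and only if $0$ lies in the support of $\gamma$, i.e. if and only if $\gamma([0,r))>0$ for every $r>0$.
   Context: An Archimedean generator is a continuous non-increasing $\psi:[0,\infty)\to[0,1]$ with $\psi(0)=1$, $\lim_{z\to\infty}\psi(z)=0$, strictly decreasing on $[0,\inf\{z:\psi(z)=0\}]$, normalized by $\psi(1)=1/2$; pseudo-inverse $\varphi(y)=\inf\{z\in[0,\infty]:\psi(z)=y\}$. $C(\mathbf{u})=\psi(\sum_{i=1}^d\varphi(u_i))$ is a $d$-dimensional Archimedean copula iff $(-1)^{d-2}\psi^{(d-2)}$ exists on $(0,\infty)$ and is non-negative, non-increasing and convex. $C$ (and $\psi$) is strict if $\varphi(0)=\infty$. The Williamson measure of $\psi$ is the unique probability measure $\gamma$ on $\mathcal{B}([0,\infty))$ with $\gamma(\{0\})=0$ and $\psi(z)=\int_{[0,\infty)}(1-tz)_+^{d-1}\,d\gamma(t)$ for all $z>0$. *)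

theory Defs
  imports "HOL-Probability.Probability"
begin

text \<open>Pseudo-inverse phi(y) = inf {z in [0,\<infinity>] : psi z = y}, with psi(\<infinity>) = lim psi = 0
  and inf of the empty set = \<infinity>.\<close>
definition pinv :: "(real \<Rightarrow> real) \<Rightarrow> real \<Rightarrow> ereal" where
  "pinv psi y = Inf ({ereal z | z. 0 \<le> z \<and> psi z = y} \<union> (if y = 0 then {\<infinity>} else {}))"

definition arch_generator :: "(real \<Rightarrow> real) \<Rightarrow> bool" where
  "arch_generator psi \<longleftrightarrow>
     continuous_on {0..} psi \<and>
     (\<forall>z\<ge>0. 0 \<le> psi z \<and> psi z \<le> 1) \<and>
     (\<forall>x y. 0 \<le> x \<and> x \<le> y \<longrightarrow> psi y \<le> psi x) \<and>
     psi 0 = 1 \<and>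
     (psi \<longlongrightarrow> 0) at_top \<and>
     (\<forall>x y. 0 \<le> x \<and> x < y \<and> ereal y \<le> Inf {ereal z | z. 0 \<le> z \<and> psi z = 0}
        \<longrightarrow> psi y < psi x) \<and>
     psi 1 = 1/2"

text \<open>Together with arch_generator this is the condition under which
  C(u) = psi(sum phi(u_i)) is a d-dimensional Archimedean copula.\<close>
definition arch_copula_gen :: "nat \<Rightarrow> (real \<Rightarrow> real) \<Rightarrow> bool" where
  "arch_copula_gen d psi \<longleftrightarrow> arch_generator psi \<and>
     (\<exists>f :: nat \<Rightarrow> real \<Rightarrow> real.
        (\<forall>x>0. f 0 x = psi x) \<and>
        (\<forall>k<d-2. \<forall>x>0. (f k has_real_derivative f (Suc k) x) (at x)) \<and>
        (let g = (\<lambda>x. (-1) ^ (d-2) * f (d-2) x) in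
           (\<forall>x>0. 0 \<le> g x) \<and>
           (\<forall>x y. 0 < x \<and> x \<le> y \<longrightarrow> g y \<le> g x) \<and>
           convex_on {0<..} g))"

definition strict_gen :: "(real \<Rightarrow> real) \<Rightarrow> bool" where
  "strict_gen psi \<longleftrightarrow> pinv psi 0 = \<infinity>"

text \<open>Williamson measure: probability measure on the Borel sets of [0,\<infinity>) (modelled as a
  Borel probability measure on the reals giving no mass to (-\<infinity>,0)), with no atom at 0.\<close>
definition williamson_measure :: "nat \<Rightarrow> (real \<Rightarrow> real) \<Rightarrow> real measure \<Rightarrow> bool" where
  "williamson_measure d psi \<gamma> \<longleftrightarrow>
     prob_space \<gamma> \<and> sets \<gamma> = sets borel \<and>
     emeasure \<gamma> {..<0} = 0 \<and> emeasure \<gamma> {0} = 0 \<and>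
     (\<forall>z>0. psi z = (\<integral>t. (max 0 (1 - t * z)) ^ (d - 1) \<partial>\<gamma>))"

end

theory Submission
  imports Defs
begin

lemma strict_iff_pos:
  assumes "psi 0 = 1"
  shows "strict_gen psi \<longleftrightarrow> (\<forall>z>0. psi z \<noteq> 0)"
proof -
  have "strict_gen psi \<longleftrightarrow> Inf {ereal z | z. 0 \<le> z \<and> psi z = 0} = \<infinity>"
    unfolding strict_gen_def pinv_def by (simp add: Inf_union_distrib)
  also have "\<dots> \<longleftrightarrow> (\<forall>x\<in>{ereal z | z. 0 \<le> z \<and> psi z = 0}. x = \<infinity>)"
    unfolding top_ereal_def[symmetric] by (rule Inf_top_conv(1))
  also have "\<dots> \<longleftrightarrow> (\<forall>z\<ge>0. psi z \<noteq> 0)"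
    by auto
  also have "\<dots> \<longleftrightarrow> (\<forall>z>0. psi z \<noteq> 0)"
  proof
    assume "\<forall>z>0. psi z \<noteq> 0"
    then show "\<forall>z\<ge>0. psi z \<noteq> 0" using assms
      by (auto simp: le_less)
  qed auto
  finally show ?thesis .
qed

theorem lemma5p4:
  fixes d :: nat and psi :: "real \<Rightarrow> real" and \<gamma> :: "real measure"
  assumes "d \<ge> 3"
    and "arch_copula_gen d psi"
    and "williamson_measure d psi \<gamma>"
  shows "strict_gen psi \<longleftrightarrow> (\<forall>r>0. measure \<gamma> {0..<r} > 0)"
proof -
  have p0: "psi 0 = 1" using assms(2) unfolding arch_copula_gen_def arch_generator_def by simp
  have ps: "prob_space \<gamma>" and sg: "sets \<gamma> = sets borel" and neg: "emeasure \<gamma> {..<0} = 0"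
    and rep: "\<And>z. z > 0 \<Longrightarrow> psi z = (\<integral>t. (max 0 (1 - t * z)) ^ (d - 1) \<partial>\<gamma>)"
    using assms(3) unfolding williamson_measure_def by auto
  interpret prob_space \<gamma> by (rule ps)
  have meas: "\<And>A. A \<in> sets borel \<Longrightarrow> A \<in> sets \<gamma>" using sg by simp
  have key: "psi z \<noteq> 0 \<longleftrightarrow> measure \<gamma> {0..<1/z} > 0" if z: "z > 0" for z
  proof -
    let ?f = "\<lambda>t::real. (max 0 (1 - t * z)) ^ (d - 1)"
    have fm: "?f \<in> borel_measurable \<gamma>"
    proof -
      have "?f \<in> borel_measurable borel" by measurable
      then show ?thesis by (subst measurable_cong_sets[OF sg refl])
    qed
    have ae0: "AE t in \<gamma>. t \<ge> 0"
    proof (rule AE_I[of _ _ "{..<0}"])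
      show "{t \<in> space \<gamma>. \<not> 0 \<le> t} \<subseteq> {..<0}" by auto
    qed (use neg meas in auto)
    have "AE t in \<gamma>. norm (?f t) \<le> 1"
      using ae0
    proof eventually_elim
      case (elim t)
      have "0 \<le> max 0 (1 - t * z)" "max 0 (1 - t * z) \<le> 1" using elim z by auto
      then show ?case by (simp add: power_le_one)
    qed
    then have int: "integrable \<gamma> ?f" using fm by (rule integrable_const_bound)
    have "psi z = 0 \<longleftrightarrow> (AE t in \<gamma>. ?f t = 0)"
      using rep[OF z] integral_nonneg_eq_0_iff_AE[OF int] by simp
    also have "{t \<in> space \<gamma>. ?f t \<noteq> 0} = {..<1/z}"
    proof -
      have "?f t \<noteq> 0 \<longleftrightarrow> t < 1/z" for t
      proof -
        have "?f t \<noteq> 0 \<longleftrightarrow> max 0 (1 - t * z) \<noteq> 0" using assms(1) by simp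
        also have "\<dots> \<longleftrightarrow> t * z < 1" by auto
        also have "\<dots> \<longleftrightarrow> t < 1/z" using z by (simp add: pos_less_divide_eq)
        finally show ?thesis .
      qed
      moreover have "space \<gamma> = UNIV" using sets_eq_imp_space_eq[OF sg] by simp
      ultimately show ?thesis by blast
    qed
    then have "(AE t in \<gamma>. ?f t = 0) \<longleftrightarrow> emeasure \<gamma> {..<1/z} = 0"
      by (subst AE_iff_measurable[OF _ refl]) (use meas in auto)
    also have "emeasure \<gamma> {..<1/z} = emeasure \<gamma> {..<0} + emeasure \<gamma> {0..<1/z}"
    proof -
      have "0 < 1/z" using z by simp
      then have "x < 1/z" if "x < 0" for x :: real using that by linarith
      then have eq: "{..<1/z} = {..<0} \<union> {0..<1/z}" by force
      have a: "{..<0::real} \<in> sets \<gamma>" "{0..<1/z} \<in> sets \<gamma>" using meas by auto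
      have b: "{..<0::real} \<inter> {0..<1/z} = {}" by auto
      show ?thesis by (subst eq) (rule plus_emeasure[OF a b, symmetric])
    qed
    also have "\<dots> = 0 + emeasure \<gamma> {0..<1/z}" using neg by simp
    finally have "psi z = 0 \<longleftrightarrow> measure \<gamma> {0..<1/z} = 0"
      by (simp add: emeasure_eq_measure)
    moreover have "measure \<gamma> {0..<1/z} \<ge> 0" by (rule measure_nonneg)
    ultimately show ?thesis by linarith
  qed
  have "strict_gen psi \<longleftrightarrow> (\<forall>z>0. measure \<gamma> {0..<1/z} > 0)"
    using strict_iff_pos[of psi, OF p0] key by auto
  also have "\<dots> \<longleftrightarrow> (\<forall>r>0. measure \<gamma> {0..<r} > 0)"
  proof safe
    fix r :: real assume H: "\<forall>z>0. measure \<gamma> {0..<1/z} > 0" and r: "r > 0"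
    have "1/r > 0" using r by simp
    from H[rule_format, OF this] show "measure \<gamma> {0..<r} > 0" by simp
  next
    fix z :: real assume H: "\<forall>r>0. measure \<gamma> {0..<r} > 0" and z: "z > 0"
    show "measure \<gamma> {0..<1/z} > 0" using H z by simp
  qed
  finally show ?thesis .
qed

end
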